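(* Let $G$ be a finite group, and let $a_1,a_2,a_3,a_4$ be independent uniformly random elements of $G$. Then \[ Pr(a_1a_2a_3a_4=a_2a_4a_1a_3)=Pr^4(G)\quad\text{and}\quad Pr(a_1a_2a_3a_4=a_3a_1a_4a_2)=Pr^4(G), \] where $Pr^4(G)$ is the probability that $a_1a_2a_3a_4=a_4a_3a_2a_1$. *)

theory Defs
  imports Complex_Main "HOL-Algebra.Group"
begin

definition prob4 :: "('a, 'b) monoid_scheme \<Rightarrow> ('a \<Rightarrow> 'a \<Rightarrow> 'a \<Rightarrow> 'a \<Rightarrow> bool) \<Rightarrow> real" where
  "prob4 G P = real (card {(a1, a2, a3, a4). a1 \<in> carrier G \<and> a2 \<in> carrier G \<and>
       a3 \<in> carrier G \<and> a4 \<in> carrier G \<and> P a1 a2 a3 a4}) / real (card (carrier G)) ^ 4"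

definition Pr4 :: "('a, 'b) monoid_scheme \<Rightarrow> real" where
  "Pr4 G = prob4 G (\<lambda>a1 a2 a3 a4.
     a1 \<otimes>\<^bsub>G\<^esub> a2 \<otimes>\<^bsub>G\<^esub> a3 \<otimes>\<^bsub>G\<^esub> a4 = a4 \<otimes>\<^bsub>G\<^esub> a3 \<otimes>\<^bsub>G\<^esub> a2 \<otimes>\<^bsub>G\<^esub> a1)"

end

theory Submission
  imports Defs
begin

context group
begin

lemma cancel_both:
  assumes "b \<in> carrier G" "c \<in> carrier G" "X \<in> carrier G" "Y \<in> carrier G"
  shows "b \<otimes> X \<otimes> c = b \<otimes> Y \<otimes> c \<longleftrightarrow> X = Y"
  using assms by (simp add: Units_eq)

lemma inv_cancel_left2 [simp]:
  "a \<in> carrier G \<Longrightarrow> z \<in> carrier G \<Longrightarrow> a \<otimes> (inv a \<otimes> z) = z"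
  by (simp add: m_assoc[symmetric])

lemma inv_cancel_left [simp]:
  "a \<in> carrier G \<Longrightarrow> z \<in> carrier G \<Longrightarrow> inv a \<otimes> (a \<otimes> z) = z"
  by (simp add: m_assoc[symmetric])

lemma eqA:
  assumes [simp]: "x \<in> carrier G" "b \<in> carrier G" "c \<in> carrier G" "w \<in> carrier G"
  shows "(b \<otimes> x) \<otimes> b \<otimes> c \<otimes> (w \<otimes> c) = b \<otimes> (w \<otimes> c) \<otimes> (b \<otimes> x) \<otimes> c
     \<longleftrightarrow> x \<otimes> b \<otimes> c \<otimes> w = w \<otimes> c \<otimes> b \<otimes> x"
proof -
  have "(b \<otimes> x) \<otimes> b \<otimes> c \<otimes> (w \<otimes> c) = b \<otimes> (x \<otimes> b \<otimes> c \<otimes> w) \<otimes> c"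
    by (simp add: m_assoc)
  moreover have "b \<otimes> (w \<otimes> c) \<otimes> (b \<otimes> x) \<otimes> c = b \<otimes> (w \<otimes> c \<otimes> b \<otimes> x) \<otimes> c"
    by (simp add: m_assoc)
  ultimately show ?thesis by (simp add: cancel_both)
qed

lemma eqB:
  assumes [simp]: "x1 \<in> carrier G" "x2 \<in> carrier G" "x3 \<in> carrier G" "x4 \<in> carrier G"
  shows "(x2 \<otimes> inv x4) \<otimes> x1 \<otimes> (x2 \<otimes> x3) \<otimes> x4 = (x2 \<otimes> x3) \<otimes> (x2 \<otimes> inv x4) \<otimes> x4 \<otimes> x1
     \<longleftrightarrow> x1 \<otimes> x2 \<otimes> x3 \<otimes> x4 = x4 \<otimes> x3 \<otimes> x2 \<otimes> x1"
proof -
  have "(x2 \<otimes> inv x4) \<otimes> x1 \<otimes> (x2 \<otimes> x3) \<otimes> x4 = x2 \<otimes> inv x4 \<otimes> (x1 \<otimes> x2 \<otimes> x3 \<otimes> x4) \<otimes> \<one>"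
    by (simp add: m_assoc)
  moreover have "(x2 \<otimes> x3) \<otimes> (x2 \<otimes> inv x4) \<otimes> x4 \<otimes> x1 = x2 \<otimes> inv x4 \<otimes> (x4 \<otimes> x3 \<otimes> x2 \<otimes> x1) \<otimes> \<one>"
    by (simp add: m_assoc)
  ultimately show ?thesis by (simp add: cancel_both)
qed

end

lemma card4_eq:
  fixes G :: "('a, 'b) monoid_scheme"
  assumes fin: "finite (carrier G)"
    and fA: "\<And>a b c d. a \<in> carrier G \<Longrightarrow> b \<in> carrier G \<Longrightarrow> c \<in> carrier G \<Longrightarrow> d \<in> carrier G \<Longrightarrow>
        f (a,b,c,d) \<in> carrier G \<times> carrier G \<times> carrier G \<times> carrier G"
    and gA: "\<And>a b c d. a \<in> carrier G \<Longrightarrow> b \<in> carrier G \<Longrightarrow> c \<in> carrier G \<Longrightarrow> d \<in> carrier G \<Longrightarrow>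
        g (a,b,c,d) \<in> carrier G \<times> carrier G \<times> carrier G \<times> carrier G"
    and gf: "\<And>a b c d. a \<in> carrier G \<Longrightarrow> b \<in> carrier G \<Longrightarrow> c \<in> carrier G \<Longrightarrow> d \<in> carrier G \<Longrightarrow>
        g (f (a,b,c,d)) = (a,b,c,d)"
    and fg: "\<And>a b c d. a \<in> carrier G \<Longrightarrow> b \<in> carrier G \<Longrightarrow> c \<in> carrier G \<Longrightarrow> d \<in> carrier G \<Longrightarrow>
        f (g (a,b,c,d)) = (a,b,c,d)"
    and PQ: "\<And>a b c d. a \<in> carrier G \<Longrightarrow> b \<in> carrier G \<Longrightarrow> c \<in> carrier G \<Longrightarrow> d \<in> carrier G \<Longrightarrow>
        P (a,b,c,d) \<longleftrightarrow> Q (f (a,b,c,d))"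
  shows "card {(a1, a2, a3, a4). a1 \<in> carrier G \<and> a2 \<in> carrier G \<and>
       a3 \<in> carrier G \<and> a4 \<in> carrier G \<and> P (a1, a2, a3, a4)} =
    card {(a1, a2, a3, a4). a1 \<in> carrier G \<and> a2 \<in> carrier G \<and>
       a3 \<in> carrier G \<and> a4 \<in> carrier G \<and> Q (a1, a2, a3, a4)}"
    (is "card ?S = card ?T")
proof (rule card_bij_eq[where f=f and g=g])
  have sub: "?S \<subseteq> carrier G \<times> carrier G \<times> carrier G \<times> carrier G"
    "?T \<subseteq> carrier G \<times> carrier G \<times> carrier G \<times> carrier G" by auto
  show "finite ?S" using fin by (intro finite_subset[OF sub(1)]) auto
  show "finite ?T" using fin by (intro finite_subset[OF sub(2)]) auto
  show "inj_on f ?S"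
    by (rule inj_on_inverseI[where g=g]) (auto simp: gf)
  show "inj_on g ?T"
    by (rule inj_on_inverseI[where g=f]) (auto simp: fg)
  show "f ` ?S \<subseteq> ?T"
  proof
    fix y assume "y \<in> f ` ?S"
    then obtain a b c d where y: "y = f (a,b,c,d)" and h: "a \<in> carrier G" "b \<in> carrier G" "c \<in> carrier G" "d \<in> carrier G" "P (a,b,c,d)"
      by auto
    have "Q y" using PQ[OF h(1-4)] h(5) y by simp
    moreover have "y \<in> carrier G \<times> carrier G \<times> carrier G \<times> carrier G" using fA[OF h(1-4)] y by simp
    ultimately show "y \<in> ?T" by auto
  qed
  show "g ` ?T \<subseteq> ?S"
  proof
    fix y assume "y \<in> g ` ?T"
    then obtain a b c d where y: "y = g (a,b,c,d)" and h: "a \<in> carrier G" "b \<in> carrier G" "c \<in> carrier G" "d \<in> carrier G" "Q (a,b,c,d)"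
      by auto
    have yc: "y \<in> carrier G \<times> carrier G \<times> carrier G \<times> carrier G" using gA[OF h(1-4)] y by simp
    then obtain a' b' c' d' where yy: "y = (a',b',c',d')" and h': "a' \<in> carrier G" "b' \<in> carrier G" "c' \<in> carrier G" "d' \<in> carrier G"
      by auto
    have "f y = (a,b,c,d)" using y fg[OF h(1-4)] by simp
    hence "P y" using PQ[OF h'] yy h(5) by simp
    then show "y \<in> ?S" using yy h' by auto
  qed
qed

theorem mainTheorem9:
  fixes G :: "('a, 'b) monoid_scheme"
  assumes "group G" and "finite (carrier G)"
  shows "prob4 G (\<lambda>a1 a2 a3 a4.
           a1 \<otimes>\<^bsub>G\<^esub> a2 \<otimes>\<^bsub>G\<^esub> a3 \<otimes>\<^bsub>G\<^esub> a4 = a2 \<otimes>\<^bsub>G\<^esub> a4 \<otimes>\<^bsub>G\<^esub> a1 \<otimes>\<^bsub>G\<^esub> a3) = Pr4 G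
       \<and> prob4 G (\<lambda>a1 a2 a3 a4.
           a1 \<otimes>\<^bsub>G\<^esub> a2 \<otimes>\<^bsub>G\<^esub> a3 \<otimes>\<^bsub>G\<^esub> a4 = a3 \<otimes>\<^bsub>G\<^esub> a1 \<otimes>\<^bsub>G\<^esub> a4 \<otimes>\<^bsub>G\<^esub> a2) = Pr4 G"
proof -
  interpret group G by fact
  let ?E = "\<lambda>(a1,a2,a3,a4). a1 \<otimes>\<^bsub>G\<^esub> a2 \<otimes>\<^bsub>G\<^esub> a3 \<otimes>\<^bsub>G\<^esub> a4 = a4 \<otimes>\<^bsub>G\<^esub> a3 \<otimes>\<^bsub>G\<^esub> a2 \<otimes>\<^bsub>G\<^esub> a1"
  let ?A = "\<lambda>(a1,a2,a3,a4). a1 \<otimes>\<^bsub>G\<^esub> a2 \<otimes>\<^bsub>G\<^esub> a3 \<otimes>\<^bsub>G\<^esub> a4 = a2 \<otimes>\<^bsub>G\<^esub> a4 \<otimes>\<^bsub>G\<^esub> a1 \<otimes>\<^bsub>G\<^esub> a3"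
  let ?B = "\<lambda>(a1,a2,a3,a4). a1 \<otimes>\<^bsub>G\<^esub> a2 \<otimes>\<^bsub>G\<^esub> a3 \<otimes>\<^bsub>G\<^esub> a4 = a3 \<otimes>\<^bsub>G\<^esub> a1 \<otimes>\<^bsub>G\<^esub> a4 \<otimes>\<^bsub>G\<^esub> a2"
  have cA: "card {(a1, a2, a3, a4). a1 \<in> carrier G \<and> a2 \<in> carrier G \<and>
       a3 \<in> carrier G \<and> a4 \<in> carrier G \<and> ?E (a1, a2, a3, a4)} =
    card {(a1, a2, a3, a4). a1 \<in> carrier G \<and> a2 \<in> carrier G \<and>
       a3 \<in> carrier G \<and> a4 \<in> carrier G \<and> ?A (a1, a2, a3, a4)}"
    apply (rule card4_eq[where f="\<lambda>(x,b,c,w). (b \<otimes>\<^bsub>G\<^esub> x, b, c, w \<otimes>\<^bsub>G\<^esub> c)"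
          and g="\<lambda>(a,b,c,d). (inv\<^bsub>G\<^esub> b \<otimes>\<^bsub>G\<^esub> a, b, c, d \<otimes>\<^bsub>G\<^esub> inv\<^bsub>G\<^esub> c)"])
    subgoal using assms(2) .
    subgoal by auto
    subgoal by auto
    subgoal by (auto simp: m_assoc)
    subgoal by (auto simp: m_assoc)
    subgoal by (simp add: eqA)
    done
  have cB: "card {(a1, a2, a3, a4). a1 \<in> carrier G \<and> a2 \<in> carrier G \<and>
       a3 \<in> carrier G \<and> a4 \<in> carrier G \<and> ?E (a1, a2, a3, a4)} =
    card {(a1, a2, a3, a4). a1 \<in> carrier G \<and> a2 \<in> carrier G \<and>
       a3 \<in> carrier G \<and> a4 \<in> carrier G \<and> ?B (a1, a2, a3, a4)}"
    apply (rule card4_eq[where f="\<lambda>(x1,x2,x3,x4). (x2 \<otimes>\<^bsub>G\<^esub> inv\<^bsub>G\<^esub> x4, x1, x2 \<otimes>\<^bsub>G\<^esub> x3, x4)"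
          and g="\<lambda>(a,b,c,d). (b, a \<otimes>\<^bsub>G\<^esub> d, inv\<^bsub>G\<^esub> (a \<otimes>\<^bsub>G\<^esub> d) \<otimes>\<^bsub>G\<^esub> c, d)"])
    subgoal using assms(2) .
    subgoal by auto
    subgoal by auto
    subgoal by (auto simp: m_assoc inv_mult_group)
    subgoal by (auto simp: m_assoc inv_mult_group)
    subgoal by (simp add: eqB)
    done
  show ?thesis using cA cB unfolding prob4_def Pr4_def by simp
qed

end
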